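(* Let $N$ be an odd square-free integer, $1<\ell\mid N$, and $m\mid N$. Then for all $n\ge 0$, $$H(\ell,m,N;\ell n)=\gcd\!\Big(\ell,\frac{N}{m}\Big)\,H_{m,N}(n).$$
   Context: A discriminant is an integer $\equiv0,1\pmod4$, fundamental if not of the form $Df^2$ with $f>1$ and $D$ a discriminant. $\chi_D=(\frac D\cdot)$ is the Kronecker symbol, $(\frac{\cdot}{\ell})$ the Jacobi symbol mod $\ell$, $L_m(s,\chi)=L(s,\chi)\prod_{p\mid m}(1-\chi(p)p^{-s})$, $\sigma_{m,N,1}(r)=\sum_{d\mid r,\gcd(d,m)=1,\gcd(r/d,N/m)=1}d$, $\mu$ Möbius, and $\gcd$ is the positive gcd. Generalized Pei–Wang class numbers: for $N$ odd square-free, $\ell\mid N$, $m\mid N$, $\varepsilon=(-1)^{(\ell-1)/2}$, and integer $n\ge0$: $H(\ell,m,N;0)=-\frac1{12}\prod_{p\mid N}(1-p)$ if $m=N$ and $0$ if $m\neq N$; $H(\ell,m,N;n)=0$ if $n>0$ and $-\varepsilon n$ is not a discriminant; otherwise write $-\varepsilon n=D_{\ell,n}f_n^2$ and $-\ell n=D'_{\ell,n}(f'_n)^2$ with $D_{\ell,n},D'_{\ell,n}$ fundamental discriminants, and $$H(\ell,m,N;n)=L_m(0,\chi_{D'_{\ell,n}})\prod_{p\mid N/m}\frac{1-\chi_{D'_{\ell,n}}(p)p^{-1}}{1-p^{-2}}\cdot\frac{\gcd(\ell,D_{\ell,n})}{\gcd(\ell,D_{\ell,n},m)}\sum_{\substack{a\mid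 f_n\\ \gcd(a,N)=1}}\mu(a)\chi_{D_{\ell,n}}(a)\Big(\frac{a}{\ell}\Big)\sigma_{m,N,1}\Big(\frac{f_n}{a}\Big).$$ $H_{m,N}(n):=H(1,m,N;n)$ (the case $\ell=1$). *)

theory Defs
  imports "HOL-Number_Theory.Number_Theory" "HOL-Computational_Algebra.Squarefree"
begin

definition is_disc :: "int \<Rightarrow> bool" where
  "is_disc D \<longleftrightarrow> D mod 4 = 0 \<or> D mod 4 = 1"

definition fund_disc :: "int \<Rightarrow> bool" where
  "fund_disc D \<longleftrightarrow> is_disc D \<and>
     \<not> (\<exists>D' (f::int). f > 1 \<and> is_disc D' \<and> D = D' * f^2)"

definition fund_part :: "int \<Rightarrow> int" where
  "fund_part x = (THE D. fund_disc D \<and> (\<exists>f::nat. f > 0 \<and> x = D * int f ^ 2))"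

definition cond_part :: "int \<Rightarrow> nat" where
  "cond_part x = (THE f::nat. f > 0 \<and> x = fund_part x * int f ^ 2)"

definition kron_prime :: "int \<Rightarrow> nat \<Rightarrow> int" where
  "kron_prime D p =
     (if p = 2 then (if even D then 0 else if D mod 8 = 1 \<or> D mod 8 = 7 then 1 else -1)
      else Legendre D (int p))"

text \<open>Kronecker symbol (D / n) for n \<ge> 1 (completely multiplicative in n).\<close>
definition kronecker :: "int \<Rightarrow> nat \<Rightarrow> int" where
  "kronecker D n = (\<Prod>p\<in>prime_factors n. kron_prime D p ^ multiplicity p n)"

text \<open>Jacobi symbol (a / l) for odd l \<ge> 1.\<close>
definition jacobi :: "int \<Rightarrow> nat \<Rightarrow> int" where
  "jacobi a l = (\<Prod>p\<in>prime_factors l. Legendre a (int p) ^ multiplicity p l)"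

definition moebius :: "nat \<Rightarrow> int" where
  "moebius n = (if n > 0 \<and> squarefree n then (-1) ^ card (prime_factors n) else 0)"

definition sigma_mN1 :: "nat \<Rightarrow> nat \<Rightarrow> nat \<Rightarrow> nat" where
  "sigma_mN1 m N r = (\<Sum>d\<in>{d. d dvd r \<and> coprime d m \<and> coprime (r div d) (N div m)}. d)"

text \<open>For a fundamental discriminant D, chi_D is primitive of conductor |D| and
  L(0, chi_D) = - B_{1,chi_D} = - sum_{a=1}^{|D|} chi_D(a) (a/|D| - 1/2)
  (this gives zeta(0) = -1/2 for D = 1).\<close>
definition L0 :: "int \<Rightarrow> real" where
  "L0 D = - (\<Sum>a=1..nat \<bar>D\<bar>. of_int (kronecker D a) * (real a / real (nat \<bar>D\<bar>) - 1/2))"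

definition L0_m :: "nat \<Rightarrow> int \<Rightarrow> real" where
  "L0_m m D = L0 D * (\<Prod>p\<in>prime_factors m. 1 - of_int (kronecker D p))"

definition eps :: "nat \<Rightarrow> int" where
  "eps l = (-1) ^ ((l - 1) div 2)"

definition H :: "nat \<Rightarrow> nat \<Rightarrow> nat \<Rightarrow> nat \<Rightarrow> real" where
  "H l m N n =
    (if n = 0 then (if m = N then - 1/12 * (\<Prod>p\<in>prime_factors N. 1 - real p) else 0)
     else if \<not> is_disc (- eps l * int n) then 0
     else
       (let D = fund_part (- eps l * int n);
            f = cond_part (- eps l * int n);
            D' = fund_part (- int l * int n)
        in L0_m m D'
           * (\<Prod>p\<in>prime_factors (N div m).
                (1 - of_int (kronecker D' p) / real p) / (1 - 1 / (real p)^2))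
           * (real_of_int (gcd (int l) D) / real_of_int (gcd (gcd (int l) D) (int m)))
           * (\<Sum>a\<in>{a. a dvd f \<and> coprime a N}.
                of_int (moebius a * kronecker D a * jacobi (int a) l)
                * real (sigma_mN1 m N (f div a)))))"

abbreviation H1 :: "nat \<Rightarrow> nat \<Rightarrow> nat \<Rightarrow> real" where
  "H1 m N n \<equiv> H 1 m N n"

end

theory Submission
  imports Defs
begin

lemma legendre_vals: "Legendre a p \<in> {-1,0,1}"
  by (simp add: Legendre_def)

lemma small_cong_eq:
  fixes x y :: int
  assumes "x \<in> {-1,0,1}" "y \<in> {-1,0,1}" "[x = y] (mod int p)" "p > 2"
  shows "x = y"
proof -
  have "int p dvd (x - y)" using assms(3) by (simp add: cong_iff_dvd_diff)
  then have "int p dvd \<bar>x - y\<bar>" by simp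
  moreover have "\<bar>x - y\<bar> \<in> {0,1,2}" using assms(1,2) by auto
  ultimately have "\<bar>x-y\<bar> = 0" using assms(4) zdvd_imp_le[of "int p" "\<bar>x-y\<bar>"] by fastforce
  then show ?thesis by simp
qed

lemma legendre_mult:
  assumes "prime p" "p > 2"
  shows "Legendre (a*b) (int p) = Legendre a (int p) * Legendre b (int p)"
proof -
  have 1: "[Legendre (a*b) p = (a*b) ^ ((p - 1) div 2)] (mod p)"
    using euler_criterion assms by blast
  have 2: "[Legendre a p * Legendre b p = a ^ ((p - 1) div 2) * b ^ ((p - 1) div 2)] (mod p)"
    using euler_criterion assms cong_mult by blast
  have "[Legendre (a*b) p = Legendre a p * Legendre b p] (mod p)"
    using 1 2 by (metis cong_sym cong_trans power_mult_distrib)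
  moreover have "Legendre a p * Legendre b p \<in> {-1,0,1}"
    using legendre_vals[of a p] legendre_vals[of b p] by auto
  ultimately show ?thesis using small_cong_eq legendre_vals assms(2) by blast
qed

lemma legendre_neg1:
  assumes "prime p" "p > 2"
  shows "Legendre (-1) (int p) = (-1) ^ ((p - 1) div 2)"
proof -
  have 1: "[Legendre (-1) p = (-1) ^ ((p - 1) div 2)] (mod p)"
    using euler_criterion assms by blast
  have "((-1::int) ^ ((p - 1) div 2)) \<in> {-1,0,1}"
    by (cases "even ((p - 1) div 2)") auto
  then show ?thesis using small_cong_eq legendre_vals assms(2) 1 by blast
qed

lemma legendre_nonzero:
  assumes "prime p" "\<not> int p dvd a"
  shows "Legendre a (int p) \<in> {-1,1}"
  using assms by (auto simp: Legendre_def cong_0_iff)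

lemma legendre_sq:
  assumes "prime p" "\<not> int p dvd a"
  shows "Legendre (a^2) (int p) = 1"
proof -
  have "\<not> int p dvd a^2"
  proof
    assume "int p dvd a^2"
    moreover have "prime (int p)" using assms by simp
    ultimately have "int p dvd a" using prime_dvd_power by blast
    then show False using assms by simp
  qed
  moreover have "QuadRes (int p) (a^2)" unfolding QuadRes_def by (auto intro: cong_refl)
  ultimately show ?thesis by (simp add: Legendre_def cong_0_iff)
qed


lemma legendre_two:
  assumes "prime p" "p > 2"
  shows "Legendre 2 (int p) = (if p mod 8 = 1 \<or> p mod 8 = 7 then 1 else -1)"
proof -
  have nd: "[2 \<noteq> 0] (mod int p)"
  proof
    assume "[2 = 0] (mod int p)"
    then have "int p dvd 2" by (simp add: cong_0_iff)
    then have "int p \<le> 2" by (rule zdvd_imp_le) simp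
    then show False using assms by simp
  qed
  interpret G: GAUSS p 2 using assms nd by unfold_locales auto
  define h where "h = (int p - 1) div 2"
  have C: "G.C = (\<lambda>x. x * 2) ` {0<..h}"
  proof -
    have "G.C = (\<lambda>x. (x * 2) mod int p) ` {0<..h}"
      unfolding G.C_def G.B_def G.A_def h_def by (simp add: image_image)
    also have "\<dots> = (\<lambda>x. x * 2) ` {0<..h}"
    proof (rule image_cong[OF refl])
      fix x assume "x \<in> {0<..h}"
      then have "0 \<le> x * 2" "x * 2 < int p" unfolding h_def by auto
      then show "(x * 2) mod int p = x * 2" by simp
    qed
    finally show ?thesis .
  qed
  have E: "G.E = (\<lambda>x. x * 2) ` {h div 2<..h}"
    unfolding G.E_def C h_def[symmetric] by auto
  have "card G.E = card {h div 2<..h}"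
    unfolding E by (rule card_image) (auto simp: inj_on_def)
  also have "\<dots> = nat (h - h div 2)" by simp
  finally have cE: "card G.E = nat (h - h div 2)" .
  have ev: "even (h - h div 2) \<longleftrightarrow> (p mod 8 = 1 \<or> p mod 8 = 7)"
  proof -
    have "odd p" using assms by (simp add: prime_odd_nat)
    then show ?thesis unfolding h_def by presburger
  qed
  have "Legendre 2 (int p) = (-1) ^ card G.E" by (rule G.gauss_lemma)
  also have "\<dots> = (if p mod 8 = 1 \<or> p mod 8 = 7 then 1 else -1)"
    unfolding cE using ev h_def by (auto simp: even_nat_iff)
  finally show ?thesis .
qed


lemma kron_prime_mult:
  assumes "prime p"
  shows "kron_prime (a*b) p = kron_prime a p * kron_prime b p"
proof (cases "p = 2")
  case True
  show ?thesis
  proof (cases "even a \<or> even b")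
    case True
    then show ?thesis using \<open>p = 2\<close> by (auto simp: kron_prime_def)
  next
    case False
    then have a: "a mod 8 = 1 \<or> a mod 8 = 3 \<or> a mod 8 = 5 \<or> a mod 8 = 7" and b: "b mod 8 = 1 \<or> b mod 8 = 3 \<or> b mod 8 = 5 \<or> b mod 8 = 7" by presburger+
    have "(a*b) mod 8 = ((a mod 8)*(b mod 8)) mod 8" by (simp add: mod_mult_eq)
    then show ?thesis using a b False \<open>p = 2\<close> by (auto simp: kron_prime_def)
  qed
next
  case False
  then have "p > 2" using assms prime_ge_2_nat[of p] by linarith
  then show ?thesis using False assms legendre_mult by (simp add: kron_prime_def)
qed

lemma eps_val: "odd k \<Longrightarrow> eps k = (if k mod 4 = 1 then 1 else -1)"
proof -
  assume "odd k"
  then have "even ((k - 1) div 2) \<longleftrightarrow> k mod 4 = 1" by presburger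
  then show ?thesis unfolding eps_def by auto
qed

lemma eps_mult:
  assumes "odd k1" "odd k2"
  shows "eps (k1*k2) = eps k1 * eps k2"
proof -
  have "odd (k1*k2)" using assms by simp
  have "(k1*k2) mod 4 = ((k1 mod 4)*(k2 mod 4)) mod 4" by (simp add: mod_mult_eq)
  moreover have "k1 mod 4 = 1 \<or> k1 mod 4 = 3" "k2 mod 4 = 1 \<or> k2 mod 4 = 3" using assms by presburger+
  ultimately show ?thesis using assms \<open>odd (k1*k2)\<close> by (auto simp: eps_val)
qed

lemma eps_mod4: "odd k \<Longrightarrow> (eps k * int k) mod 4 = 1"
proof -
  assume "odd k"
  then have "k mod 4 = 1 \<or> k mod 4 = 3" by presburger
  then show ?thesis using \<open>odd k\<close> by (auto simp: eps_val) presburger+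
qed

lemma eps_pm: "eps k \<in> {-1,1}"
  unfolding eps_def by (cases "even ((k - 1) div 2)") auto

lemma reciprocity_prime:
  assumes "prime q" "q > 2" "prime p" "p \<noteq> q"
  shows "kron_prime (eps q * int q) p = Legendre (int p) (int q)"
proof (cases "p = 2")
  case True
  have oq: "odd q" using assms by (simp add: prime_odd_nat)
  then have q8: "q mod 8 = 1 \<or> q mod 8 = 3 \<or> q mod 8 = 5 \<or> q mod 8 = 7" by presburger
  have L: "Legendre (int p) (int q) = (if q mod 8 = 1 \<or> q mod 8 = 7 then 1 else -1)"
    using legendre_two[OF assms(1,2)] True by simp
  show ?thesis
  proof (cases "q mod 4 = 1")
    case c: True
    then have "q mod 8 = 1 \<or> q mod 8 = 5" using q8 c by presburger
    moreover have "int q mod 8 = int (q mod 8)" by (simp add: zmod_int)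
    ultimately show ?thesis using L True oq c by (auto simp: kron_prime_def eps_val)
  next
    case c: False
    then have q87: "q mod 8 = 3 \<or> q mod 8 = 7" using q8 c by presburger
    have "(- int q) mod 8 = (if q mod 8 = 3 then 5 else 1)" using q87 by presburger
    then show ?thesis using L True oq c q87 by (auto simp: kron_prime_def eps_val)
  qed
next
  case False
  then have p2: "p > 2" using assms prime_ge_2_nat[of p] by linarith
  have oq: "odd q" using assms by (simp add: prime_odd_nat)
  have QR: "Legendre p q * Legendre q p = (-1::int) ^ ((p - 1) div 2 * ((q - 1) div 2))"
    using Quadratic_Reciprocity assms p2 by metis
  have ndq: "\<not> int q dvd int p" and ndp: "\<not> int p dvd int q"
    using assms primes_dvd_imp_eq by (auto simp: int_dvd_int_iff)
  have Lpq: "Legendre p q \<in> {-1,1}" using legendre_nonzero[OF assms(1) ndq] by auto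
  have Lqp: "Legendre q p \<in> {-1,1}" using legendre_nonzero[OF assms(3) ndp] by auto
  have kp: "kron_prime (eps q * int q) p = Legendre (eps q) p * Legendre q p"
    using False legendre_mult[OF assms(3) p2] by (simp add: kron_prime_def)
  show ?thesis
  proof (cases "q mod 4 = 1")
    case True
    then have "even ((q - 1) div 2)" using oq by presburger
    then have "Legendre p q * Legendre q p = 1" using QR by simp
    moreover have "Legendre 1 (int p) = 1" using legendre_sq[OF assms(3), of 1] p2 by simp
    ultimately show ?thesis using kp Lpq Lqp True oq by (auto simp: eps_val)
  next
    case c: False
    then have "odd ((q - 1) div 2)" using oq by presburger
    moreover have "((-1::int) ^ ((p - 1) div 2)) \<in> {-1,1}"
      by (cases "even ((p - 1) div 2)") auto
    ultimately have "Legendre p q * Legendre q p = (-1) ^ ((p - 1) div 2)" using QR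
      by (auto simp: power_mult)
    moreover have "Legendre (-1) (int p) = (-1) ^ ((p - 1) div 2)"
      using legendre_neg1[OF assms(3) p2] .
    moreover have "((-1::int) ^ ((p - 1) div 2)) \<in> {-1,1}"
      by (cases "even ((p - 1) div 2)") auto
    ultimately show ?thesis using kp Lpq Lqp c oq by (auto simp: eps_val)
  qed
qed

lemma pf_prod_shrink:
  fixes \<chi> :: "nat \<Rightarrow> int"
  assumes "a > 0" "prime_factors a \<subseteq> S" "finite S" "\<forall>p\<in>S. prime p"
  shows "(\<Prod>p\<in>S. \<chi> p ^ multiplicity p a) = (\<Prod>p\<in>prime_factors a. \<chi> p ^ multiplicity p a)"
proof (rule prod.mono_neutral_right[OF assms(3,2)], rule ballI)
  fix p assume "p \<in> S - prime_factors a"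
  then have "\<not> p dvd a" using assms by (auto simp: in_prime_factors_iff)
  then show "\<chi> p ^ multiplicity p a = 1" by (simp add: not_dvd_imp_multiplicity_0)
qed

lemma pf_prod_mult:
  fixes \<chi> :: "nat \<Rightarrow> int"
  assumes "a > 0" "b > 0"
  shows "(\<Prod>p\<in>prime_factors (a*b). \<chi> p ^ multiplicity p (a*b)) =
         (\<Prod>p\<in>prime_factors a. \<chi> p ^ multiplicity p a) * (\<Prod>p\<in>prime_factors b. \<chi> p ^ multiplicity p b)"
proof -
  define S where "S = prime_factors (a*b)"
  have S: "S = prime_factors a \<union> prime_factors b" unfolding S_def using assms by (simp add: prime_factors_product)
  have fS: "finite S" unfolding S_def by simp
  have pS: "\<forall>p\<in>S. prime p" unfolding S_def by (auto simp: in_prime_factors_iff)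
  have "(\<Prod>p\<in>S. \<chi> p ^ multiplicity p (a*b)) = (\<Prod>p\<in>S. \<chi> p ^ multiplicity p a * \<chi> p ^ multiplicity p b)"
  proof (rule prod.cong[OF refl])
    fix p assume "p \<in> S"
    then have "prime p" using pS by auto
    then have "multiplicity p (a*b) = multiplicity p a + multiplicity p b"
      using assms by (intro prime_elem_multiplicity_mult_distrib) auto
    then show "\<chi> p ^ multiplicity p (a*b) = \<chi> p ^ multiplicity p a * \<chi> p ^ multiplicity p b"
      by (simp add: power_add)
  qed
  also have "\<dots> = (\<Prod>p\<in>S. \<chi> p ^ multiplicity p a) * (\<Prod>p\<in>S. \<chi> p ^ multiplicity p b)"
    by (rule prod.distrib)
  also have "\<dots> = (\<Prod>p\<in>prime_factors a. \<chi> p ^ multiplicity p a) * (\<Prod>p\<in>prime_factors b. \<chi> p ^ multiplicity p b)"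
    using pf_prod_shrink[OF assms(1) _ fS pS] pf_prod_shrink[OF assms(2) _ fS pS] S by auto
  finally show ?thesis unfolding S_def .
qed

lemma kron_mult_right: "a > 0 \<Longrightarrow> b > 0 \<Longrightarrow> kronecker D (a*b) = kronecker D a * kronecker D b"
  unfolding kronecker_def by (rule pf_prod_mult)

lemma jac_mult_right: "a > 0 \<Longrightarrow> b > 0 \<Longrightarrow> jacobi x (a*b) = jacobi x a * jacobi x b"
  unfolding jacobi_def by (rule pf_prod_mult)

lemma kron_mult_left: "kronecker (D1*D2) n = kronecker D1 n * kronecker D2 n"
  unfolding kronecker_def
  by (auto simp: kron_prime_mult in_prime_factors_iff power_mult_distrib prod.distrib[symmetric] intro!: prod.cong)

lemma jac_mult_left:
  assumes "odd l"
  shows "jacobi (a*b) l = jacobi a l * jacobi b l"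
proof -
  have "\<And>p. p \<in> prime_factors l \<Longrightarrow> Legendre (a*b) (int p) = Legendre a (int p) * Legendre b (int p)"
  proof -
    fix p assume "p \<in> prime_factors l"
    then have "prime p" "p dvd l" by (auto simp: in_prime_factors_iff)
    then have "p \<noteq> 2" using assms by auto
    then have "p > 2" using \<open>prime p\<close> prime_ge_2_nat[of p] by linarith
    then show "Legendre (a*b) (int p) = Legendre a (int p) * Legendre b (int p)"
      using legendre_mult \<open>prime p\<close> by blast
  qed
  then show ?thesis unfolding jacobi_def
    by (auto simp: power_mult_distrib prod.distrib[symmetric] intro!: prod.cong)
qed

lemma kron_prime_eq: "prime p \<Longrightarrow> kronecker D p = kron_prime D p"
  unfolding kronecker_def by (simp add: prime_prime_factors multiplicity_self)

lemma jac_prime: "prime q \<Longrightarrow> jacobi a q = Legendre a (int q)"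
  unfolding jacobi_def by (simp add: prime_prime_factors multiplicity_self)

lemma kron_1 [simp]: "kronecker D 1 = 1"
  unfolding kronecker_def by simp

lemma jac_1 [simp]: "jacobi a 1 = 1"
  unfolding jacobi_def by simp

lemma legendre_one:
  assumes "prime p" shows "Legendre 1 (int p) = 1"
proof -
  have "p > 1" using assms prime_gt_1_nat by blast
  then have "\<not> int p dvd 1" by simp
  then show ?thesis using legendre_sq[OF assms, of 1] by simp
qed

lemma kron_prime_one: "prime p \<Longrightarrow> kron_prime 1 p = 1"
  by (simp add: kron_prime_def legendre_one)

lemma kron_one_left: "kronecker 1 n = 1"
  unfolding kronecker_def by (auto simp: kron_prime_one in_prime_factors_iff intro!: prod.neutral)

lemma jac_one_left: "jacobi 1 l = 1"
  unfolding jacobi_def by (auto simp: legendre_one in_prime_factors_iff intro!: prod.neutral)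

lemma jac_sq:
  assumes "coprime a l"
  shows "jacobi (int a ^ 2) l = 1"
  unfolding jacobi_def
proof (rule prod.neutral, rule ballI)
  fix q assume "q \<in> prime_factors l"
  then have "prime q" "q dvd l" by (auto simp: in_prime_factors_iff)
  then have "\<not> q dvd a" using assms
    by (metis coprime_common_divisor not_prime_unit)
  then have "\<not> int q dvd int a" by simp
  then show "Legendre (int a ^ 2) (int q) ^ multiplicity q l = 1"
    using legendre_sq[OF \<open>prime q\<close>] by simp
qed

lemma eps_1 [simp]: "eps 1 = 1"
  by (simp add: eps_def)

lemma KRp:
  assumes "odd k" "prime p" "\<not> p dvd k"
  shows "kron_prime (eps k * int k) p = jacobi (int p) k"
  using assms
proof (induction k rule: less_induct)
  case (less k)
  show ?case
  proof (cases "k = 1")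
    case True
    have "eps k * int k = 1" "jacobi (int p) k = 1" unfolding True by (simp_all add: eps_def jacobi_def)
    then show ?thesis using kron_prime_one[OF less.prems(2)] by simp
  next
    case False
    then obtain q where q: "prime q" "q dvd k" using prime_factor_nat by blast
    then obtain k' where k: "k = q * k'" by blast
    have k0: "k > 0" using less.prems by (intro Nat.gr0I) auto
    have "odd q" "odd k'" using less.prems k by auto
    have "k' > 0" using k k0 by auto
    have "q > 1" using q prime_gt_1_nat by blast
    then have "k' < k" using k \<open>k' > 0\<close> by simp
    have "\<not> p dvd k'" using less.prems k by auto
    have "q \<noteq> 2" using \<open>odd q\<close> by auto
    then have "q > 2" using q prime_ge_2_nat[of q] by linarith
    have "p \<noteq> q" using less.prems q by auto
    have "eps k * int k = (eps q * int q) * (eps k' * int k')"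
      using eps_mult[OF \<open>odd q\<close> \<open>odd k'\<close>] k by simp
    then have "kron_prime (eps k * int k) p = kron_prime (eps q * int q) p * kron_prime (eps k' * int k') p"
      using kron_prime_mult less.prems by simp
    also have "\<dots> = Legendre (int p) (int q) * jacobi (int p) k'"
      using reciprocity_prime[OF q(1) \<open>q > 2\<close> less.prems(2) \<open>p \<noteq> q\<close>]
        less.IH[OF \<open>k' < k\<close> \<open>odd k'\<close> less.prems(2) \<open>\<not> p dvd k'\<close>] by simp
    also have "\<dots> = jacobi (int p) k"
      using k jac_mult_right[of q k' "int p"] \<open>k' > 0\<close> \<open>q > 1\<close> jac_prime[OF q(1)] by simp
    finally show ?thesis .
  qed
qed

lemma KR:
  assumes "odd k" "a > 0" "coprime a k"
  shows "kronecker (eps k * int k) a = jacobi (int a) k"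
  using assms
proof (induction a rule: less_induct)
  case (less a)
  show ?case
  proof (cases "a = 1")
    case True
    have "kronecker (eps k * int k) a = 1" unfolding True by (rule kron_1)
    moreover have "jacobi (int a) k = 1" unfolding True using jac_one_left by simp
    ultimately show ?thesis by simp
  next
    case False
    then obtain p where p: "prime p" "p dvd a" using prime_factor_nat by blast
    then obtain a' where a: "a = p * a'" by blast
    have "a' > 0" using a less.prems by auto
    have "p > 1" using p prime_gt_1_nat by blast
    then have "a' < a" using a \<open>a' > 0\<close> by simp
    have "coprime a' k" "coprime p k" using less.prems a by auto
    then have "\<not> p dvd k" using p by (metis coprime_common_divisor dvd_refl not_prime_unit)
    have "kronecker (eps k * int k) a = kronecker (eps k * int k) p * kronecker (eps k * int k) a'"
      using a kron_mult_right \<open>a' > 0\<close> \<open>p > 1\<close> by simp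
    also have "\<dots> = jacobi (int p) k * jacobi (int a') k"
      using kron_prime_eq[OF p(1)] KRp[OF less.prems(1) p(1) \<open>\<not> p dvd k\<close>]
        less.IH[OF \<open>a' < a\<close> less.prems(1) \<open>a' > 0\<close> \<open>coprime a' k\<close>] by simp
    also have "\<dots> = jacobi (int a) k"
      using a jac_mult_left[OF less.prems(1), of "int p" "int a'"] by simp
    finally show ?thesis .
  qed
qed

lemma disc_mult: "is_disc a \<Longrightarrow> is_disc b \<Longrightarrow> is_disc (a*b)"
  unfolding is_disc_def
proof -
  assume a: "a mod 4 = 0 \<or> a mod 4 = 1" and b: "b mod 4 = 0 \<or> b mod 4 = 1"
  have "(a*b) mod 4 = ((a mod 4)*(b mod 4)) mod 4" by (simp add: mod_mult_eq)
  then show "(a*b) mod 4 = 0 \<or> (a*b) mod 4 = 1" using a b by auto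
qed

lemma disc_sq: "is_disc ((k::int)^2)"
proof -
  have "k mod 4 = 0 \<or> k mod 4 = 1 \<or> k mod 4 = 2 \<or> k mod 4 = 3" by presburger
  moreover have "(k^2) mod 4 = ((k mod 4)*(k mod 4)) mod 4" by (simp add: power2_eq_square mod_mult_eq)
  ultimately show ?thesis unfolding is_disc_def by auto
qed

lemma mod4_unit: "(u::int) mod 4 = 1 \<Longrightarrow> (u*z) mod 4 = z mod 4"
proof -
  assume "u mod 4 = 1"
  then have "(u*z) mod 4 = (1 * (z mod 4)) mod 4" by (metis mod_mult_eq mod_mod_trivial)
  then show ?thesis by simp
qed

lemma odd_sq_mod4: "odd (k::int) \<Longrightarrow> (k^2) mod 4 = 1"
proof -
  assume "odd k"
  then have "k mod 4 = 1 \<or> k mod 4 = 3" by presburger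
  moreover have "(k^2) mod 4 = ((k mod 4)*(k mod 4)) mod 4" by (simp add: power2_eq_square mod_mult_eq)
  ultimately show ?thesis by auto
qed

lemma fund_nonzero: "fund_disc D \<Longrightarrow> D \<noteq> 0"
  unfolding fund_disc_def is_disc_def
  by (metis mod_0 mult_zero_left one_less_numeral_iff semiring_norm(76))

lemma fund_div: "fund_disc D \<Longrightarrow> prime (p::int) \<Longrightarrow> p^2 dvd D \<Longrightarrow> \<not> is_disc (D div p^2)"
  unfolding fund_disc_def
  by (metis dvd_div_mult_self prime_gt_1_int mult.commute)

lemma fund_odd_sq:
  assumes "fund_disc D" "prime (p::int)" "odd p"
  shows "\<not> p^2 dvd D"
proof
  assume "p^2 dvd D"
  then obtain E where E: "D = p^2 * E" by blast
  have "(p^2 * E) mod 4 = E mod 4" using odd_sq_mod4[OF assms(3)] by (rule mod4_unit)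
  then have "is_disc E" using assms(1) E unfolding fund_disc_def is_disc_def by simp
  moreover have "D div p^2 = E" using E assms(2) by simp
  ultimately show False using fund_div[OF assms(1,2) \<open>p^2 dvd D\<close>] by simp
qed

lemma fund_char:
  assumes "is_disc X" "\<And>p::int. prime p \<Longrightarrow> p^2 dvd X \<Longrightarrow> \<not> is_disc (X div p^2)"
  shows "fund_disc X"
  unfolding fund_disc_def
proof (intro conjI assms(1) notI)
  assume "\<exists>D' f. 1 < f \<and> is_disc D' \<and> X = D' * f\<^sup>2"
  then obtain D' f where f: "f > 1" "is_disc D'" "X = D' * f^2" by blast
  then have "\<bar>f\<bar> \<noteq> 1" by simp
  then obtain p where p: "prime p" "p dvd f" using prime_factor_int by blast
  then obtain f' where f': "f = p * f'" by blast
  have "X = (D' * f'^2) * p^2" using f f' by (simp add: power_mult_distrib)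
  moreover have "p \<noteq> 0" using p by auto
  ultimately have "p^2 dvd X" "X div p^2 = D' * f'^2" by simp_all
  moreover have "is_disc (D' * f'^2)" using f(2) disc_sq disc_mult by blast
  ultimately show False using assms(2)[OF p(1)] by simp
qed

lemma fund_exists:
  assumes "is_disc x" "x \<noteq> 0"
  shows "\<exists>D (f::nat). fund_disc D \<and> f > 0 \<and> x = D * int f ^ 2"
  using assms
proof (induction "nat \<bar>x\<bar>" arbitrary: x rule: less_induct)
  case less
  show ?case
  proof (cases "fund_disc x")
    case True
    then show ?thesis by (intro exI[of _ x] exI[of _ "1::nat"]) simp
  next
    case False
    then obtain D' k where k: "k > 1" "is_disc D'" "x = D' * k^2"
      using less.prems unfolding fund_disc_def by blast
    have "D' \<noteq> 0" using k less.prems by auto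
    have "\<bar>x\<bar> = \<bar>D'\<bar> * k^2" using k by (simp add: abs_mult)
    moreover have "k^2 > 1" using k by (simp add: one_less_power)
    ultimately have "\<bar>D'\<bar> < \<bar>x\<bar>" using \<open>D' \<noteq> 0\<close> by (simp add: mult_less_cancel_left1)
    then have "nat \<bar>D'\<bar> < nat \<bar>x\<bar>" by simp
    then obtain D f where Df: "fund_disc D" "f > 0" "D' = D * int f ^ 2"
      using less.hyps k(2) \<open>D' \<noteq> 0\<close> by blast
    have "x = D * int (f * nat k) ^ 2" using Df k by (simp add: power_mult_distrib)
    moreover have "f * nat k > 0" using Df k by simp
    ultimately show ?thesis using Df by blast
  qed
qed

lemma U_aux:
  assumes "is_disc D1" "fund_disc D2" "prime (p::int)" "p dvd a" "\<not> p dvd b" "D1 * a^2 = D2 * b^2"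
  shows False
proof -
  have "p^2 dvd D2 * b^2" using assms(4,6) by (metis dvd_mult_right power_mono_iff dvd_power_same mult.commute dvd_mult2)
  moreover have "coprime (p^2) (b^2)" using assms(3,5) by (simp add: prime_imp_coprime)
  ultimately have d: "p^2 dvd D2" using coprime_dvd_mult_left_iff by blast
  show False
  proof (cases "odd p")
    case True
    then show False using fund_odd_sq[OF assms(2,3) True] d by simp
  next
    case False
    then have "(2::int) dvd p" by simp
    moreover have "prime (2::int)" using two_is_prime_nat by simp
    ultimately have "p = 2" using assms(3) primes_dvd_imp_eq by metis
    then obtain a' where a': "a = 2 * a'" using assms(4) by blast
    obtain E where E: "D2 = 4 * E" using d \<open>p = 2\<close> by auto
    have "E * b^2 = D1 * a'^2" using assms(6) a' E by (simp add: power_mult_distrib)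
    then have "is_disc (E * b^2)" using assms(1) disc_sq disc_mult by metis
    moreover have "odd b" using assms(5) \<open>p = 2\<close> by simp
    then have "(b^2 * E) mod 4 = E mod 4" using odd_sq_mod4 mod4_unit by blast
    ultimately have "is_disc E" unfolding is_disc_def by (simp add: mult.commute)
    moreover have "D2 div p^2 = E" using E \<open>p = 2\<close> by simp
    ultimately show False using fund_div[OF assms(2,3) d] by simp
  qed
qed

lemma fund_unique:
  assumes "fund_disc D1" "fund_disc D2" "(a::int) > 0" "b > 0" "D1 * a^2 = D2 * b^2"
  shows "D1 = D2"
  using assms(3-5)
proof (induction "nat (a + b)" arbitrary: a b rule: less_induct)
  case less
  have d1: "is_disc D1" and d2: "is_disc D2" using assms(1,2) unfolding fund_disc_def by auto
  show ?case
  proof (cases "a = 1 \<and> b = 1")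
    case True
    then show ?thesis using less.prems by simp
  next
    case False
    then obtain p where p: "prime p" "p dvd a \<or> p dvd b"
      using less.prems prime_factor_int by (metis abs_of_pos)
    show ?thesis
    proof (cases "p dvd a \<and> p dvd b")
      case True
      then obtain a' b' where ab: "a = p * a'" "b = p * b'" by (meson dvdE)
      have "p > 1" using p prime_gt_1_int by blast
      have "a' > 0" "b' > 0" using ab less.prems \<open>p > 1\<close> by (auto simp: zero_less_mult_iff)
      have "p * a' \<ge> 2 * a'" "p * b' \<ge> 2 * b'" using \<open>p > 1\<close> \<open>a' > 0\<close> \<open>b' > 0\<close> by simp_all
      then have "a' + b' < a + b" using ab \<open>a' > 0\<close> \<open>b' > 0\<close> by linarith
      have "p^2 * (D1 * a'^2) = p^2 * (D2 * b'^2)" using less.prems(3) ab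
        by (simp add: power_mult_distrib algebra_simps)
      then have "D1 * a'^2 = D2 * b'^2" using \<open>p > 1\<close> by simp
      then show ?thesis using less.hyps[of a' b'] \<open>a' + b' < a + b\<close> \<open>a' > 0\<close> \<open>b' > 0\<close> by simp
    next
      case False
      then show ?thesis
      proof (cases "p dvd a")
        case True
        then show ?thesis using U_aux[OF d1 assms(2) p(1) True _ less.prems(3)] False by blast
      next
        case c: False
        then have "p dvd b" using p by blast
        then show ?thesis using U_aux[OF d2 assms(1) p(1) \<open>p dvd b\<close> c] less.prems(3) by simp
      qed
    qed
  qed
qed

lemma fund_part_eq:
  assumes "fund_disc D" "f > 0" "x = D * int f ^ 2"
  shows "fund_part x = D" "cond_part x = f"
proof -
  show fp: "fund_part x = D"
    unfolding fund_part_def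
  proof (rule the_equality)
    show "fund_disc D \<and> (\<exists>f::nat. f > 0 \<and> x = D * int f ^ 2)" using assms by blast
  next
    fix D'' assume "fund_disc D'' \<and> (\<exists>f::nat. f > 0 \<and> x = D'' * int f ^ 2)"
    then obtain f'' :: nat where "fund_disc D''" "f'' > 0" "x = D'' * int f'' ^ 2" by blast
    then show "D'' = D" using fund_unique[of D'' D "int f''" "int f"] assms by simp
  qed
  show "cond_part x = f"
    unfolding cond_part_def fp
  proof (rule the_equality)
    show "f > 0 \<and> x = D * int f ^ 2" using assms by simp
  next
    fix f' :: nat assume "f' > 0 \<and> x = D * int f' ^ 2"
    then have "D * int f' ^ 2 = D * int f ^ 2" using assms(3) by metis
    then have "int f' ^ 2 = int f ^ 2" using fund_nonzero[OF assms(1)] by simp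
    then have "int f' = int f" using power2_eq_iff_nonneg[of "int f'" "int f"] by simp
    then show "f' = f" by simp
  qed
qed

lemma sqf_coprime: "squarefree (a * b) \<Longrightarrow> coprime a (b::nat)"
proof (rule coprimeI)
  fix d assume s: "squarefree (a*b)" and "d dvd a" "d dvd b"
  then have "d^2 dvd a*b" by (simp add: power2_eq_square mult_dvd_mono)
  then show "is_unit d" using s unfolding squarefree_def by blast
qed

lemma gcd_prod_dvd: "gcd (a*b) c dvd gcd a c * gcd b (c::nat)"
proof -
  have e1: "gcd b c * gcd a c = gcd (gcd b c * a) (gcd b c * c)" by (rule gcd_mult_distrib_nat)
  have e2: "a * gcd b c = gcd (a*b) (a*c)" by (rule gcd_mult_distrib_nat)
  have e3: "c * gcd b c = gcd (c*b) (c*c)" by (rule gcd_mult_distrib_nat)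
  let ?d = "gcd (a*b) c"
  have "?d dvd gcd (a*b) (a*c)" by (intro gcd_greatest) auto
  moreover have "?d dvd gcd (c*b) (c*c)" by (intro gcd_greatest) auto
  ultimately have "?d dvd gcd (gcd b c * a) (gcd b c * c)"
    using e2 e3 by (simp add: mult.commute)
  then show ?thesis using e1 by (simp add: mult.commute)
qed

lemma gcd_coprime_prod:
  assumes "coprime a (b::nat)"
  shows "gcd (a*b) c = gcd a c * gcd b c"
proof (rule dvd_antisym[OF gcd_prod_dvd])
  have "coprime (gcd a c) (gcd b c)" using assms coprime_divisors by (meson gcd_dvd1)
  then have "gcd a c * gcd b c dvd c" by (intro divides_mult) auto
  moreover have "gcd a c * gcd b c dvd a * b" by (intro mult_dvd_mono) auto
  ultimately show "gcd a c * gcd b c dvd gcd (a*b) c" by simp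
qed

lemma sigma_step:
  assumes "prime q" "q dvd N" "squarefree N" "m dvd N" "r > 0"
  shows "sigma_mN1 m N (q*r) = (if q dvd m then sigma_mN1 m N r else q * sigma_mN1 m N r)"
proof -
  define k where "k = N div m"
  have N: "N = m * k" using assms(4) unfolding k_def by simp
  have cmk: "coprime m k" using assms(3) N sqf_coprime by blast
  have q0: "q > 0" using assms(1) prime_gt_0_nat by blast
  define A where "A r = {d. d dvd r \<and> coprime d m \<and> coprime (r div d) k}" for r
  have sA: "sigma_mN1 m N r = (\<Sum>d\<in>A r. d)" for r unfolding sigma_mN1_def A_def k_def by simp
  have fin: "finite (A r)" using assms(5) unfolding A_def by (auto intro: finite_subset[of _ "{..r}"] dest: dvd_imp_le)
  show ?thesis
  proof (cases "q dvd m")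
    case True
    have cqk: "coprime q k" using True cmk by (meson coprime_divisors dvd_refl)
    have "A (q*r) = A r"
    proof (rule Set.set_eqI, rule iffI)
      fix d assume "d \<in> A (q*r)"
      then have d: "d dvd q*r" "coprime d m" "coprime (q*r div d) k" unfolding A_def by auto
      have "coprime d q" using d(2) True by (meson coprime_divisors dvd_refl)
      then have "d dvd r" using d(1) coprime_dvd_mult_left_iff[of d q r] by (simp add: mult.commute)
      then have "q*r div d = q * (r div d)" by (simp add: div_mult_swap)
      then have "coprime (r div d) k" using d(3) by simp
      then show "d \<in> A r" using \<open>d dvd r\<close> d(2) unfolding A_def by simp
    next
      fix d assume "d \<in> A r"
      then have d: "d dvd r" "coprime d m" "coprime (r div d) k" unfolding A_def by auto
      then have "q*r div d = q * (r div d)" by (simp add: div_mult_swap)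
      then have "coprime (q*r div d) k" using d(3) cqk by simp
      then show "d \<in> A (q*r)" using d unfolding A_def by simp
    qed
    then show ?thesis using True sA by simp
  next
    case False
    have "q dvd k" using assms(1,2) False N prime_dvd_mult_iff by blast
    have cqm: "coprime q m" using assms(1) False by (rule prime_imp_coprime)
    have "A (q*r) = (\<lambda>d. q*d) ` A r"
    proof (rule Set.set_eqI, rule iffI)
      fix d assume "d \<in> A (q*r)"
      then have d: "d dvd q*r" "coprime d m" "coprime (q*r div d) k" unfolding A_def by auto
      define e where "e = q*r div d"
      have de: "d * e = q * r" using d(1) unfolding e_def by simp
      have "\<not> q dvd e"
      proof
        assume "q dvd e"
        moreover have "coprime e k" using d(3) unfolding e_def .
        ultimately show False using \<open>q dvd k\<close> assms(1) coprime_common_divisor not_prime_unit by blast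
      qed
      moreover have "q dvd d * e" using de by simp
      ultimately have "q dvd d" using assms(1) prime_dvd_mult_iff by blast
      then obtain d' where d': "d = q * d'" by blast
      have "d' dvd r" using d(1) d' q0 by simp
      have "coprime d' m" using d(2) d' by simp
      have "q * (d' * e) = q * r" using de d' by (simp add: mult.assoc)
      then have de': "d' * e = r" using q0 by simp
      then have "d' > 0" using assms(5) by (cases "d' = 0") auto
      then have "r div d' = e" using de' by auto
      then have "coprime (r div d') k" using d(3) unfolding e_def by simp
      then have "d' \<in> A r" using \<open>d' dvd r\<close> \<open>coprime d' m\<close> unfolding A_def by simp
      then show "d \<in> (\<lambda>d. q*d) ` A r" using d' by blast
    next
      fix d assume "d \<in> (\<lambda>d. q*d) ` A r"
      then obtain d' where d': "d = q*d'" "d' \<in> A r" by blast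
      then have h: "d' dvd r" "coprime d' m" "coprime (r div d') k" unfolding A_def by auto
      have "q*r div d = r div d'" using d'(1) q0 by simp
      then show "d \<in> A (q*r)" using h d'(1) cqm unfolding A_def by simp
    qed
    then have "(\<Sum>d\<in>A (q*r). d) = (\<Sum>d\<in>(\<lambda>d. q*d) ` A r. d)" by simp
    also have "\<dots> = (\<Sum>d\<in>A r. q*d)" using q0 by (subst sum.reindex) (auto simp: inj_on_def)
    also have "\<dots> = q * (\<Sum>d\<in>A r. d)" by (simp add: sum_distrib_left)
    finally show ?thesis using False sA by simp
  qed
qed

lemma sigma_mult:
  assumes "g dvd N" "squarefree N" "m dvd N" "r > 0"
  shows "sigma_mN1 m N (g*r) * gcd g m = sigma_mN1 m N r * g"
  using assms(1)
proof (induction g rule: less_induct)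
  case (less g)
  have "N > 0" using assms(2) by (intro Nat.gr0I) auto
  then have "g > 0" using less.prems by (intro Nat.gr0I) auto
  show ?case
  proof (cases "g = 1")
    case True
    then show ?thesis by simp
  next
    case False
    then obtain q where q: "prime q" "q dvd g" using prime_factor_nat by blast
    then obtain g' where g: "g = q * g'" by blast
    have "g' > 0" using g \<open>g > 0\<close> by auto
    have "q > 1" using q prime_gt_1_nat by blast
    then have "g' < g" using g \<open>g' > 0\<close> by simp
    have "g' dvd N" "q dvd N" using less.prems g by auto
    have "squarefree g" using less.prems assms(2) squarefree_mono by blast
    then have cq: "coprime q g'" using g sqf_coprime by blast
    have gm: "gcd g m = gcd q m * gcd g' m" using g gcd_coprime_prod[OF cq] by simp
    have IH: "sigma_mN1 m N (g'*r) * gcd g' m = sigma_mN1 m N r * g'"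
      using less.IH[OF \<open>g' < g\<close> \<open>g' dvd N\<close>] .
    have st: "sigma_mN1 m N (q*(g'*r)) = (if q dvd m then sigma_mN1 m N (g'*r) else q * sigma_mN1 m N (g'*r))"
      using sigma_step[OF q(1) \<open>q dvd N\<close> assms(2,3)] \<open>g' > 0\<close> assms(4) by simp
    have gq: "gcd q m = (if q dvd m then q else 1)"
    proof (cases "q dvd m")
      case True
      then show ?thesis by (simp add: gcd_nat.absorb1)
    next
      case False
      then have "coprime q m" using q(1) prime_imp_coprime by blast
      then show ?thesis using False by simp
    qed
    show ?thesis
      using st gq gm IH g by (cases "q dvd m") (simp_all add: mult.assoc mult.left_commute)
  qed
qed

lemma coprime_by_primes:
  fixes a b :: int
  assumes "\<And>p. prime p \<Longrightarrow> p dvd a \<Longrightarrow> p dvd b \<Longrightarrow> False"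
  shows "coprime a b"
proof (cases "\<bar>gcd a b\<bar> = 1")
  case True
  then have "gcd a b = 1" by simp
  then show ?thesis by (simp add: coprime_iff_gcd_eq_1)
next
  case False
  then obtain p where "prime p" "p dvd gcd a b" using prime_factor_int by blast
  then show ?thesis using assms by auto
qed

lemma eps_sq: "eps k * eps k = 1"
  using eps_pm[of k] by auto

lemma KI:
  assumes "odd g" "odd h" "g > 0" "h > 0" "coprime a (g*h)" "a > 0"
  shows "kronecker (eps (g*h) * int h * D0) a * jacobi (int a) (g*h) = kronecker (int g * D0) a"
proof -
  have e: "eps (g*h) * int h * D0 = eps g * (eps h * int h) * D0"
    using eps_mult[OF assms(1,2)] by simp
  have cg: "coprime a g" and ch: "coprime a h" using assms(5) by auto
  have k1: "kronecker (eps (g*h) * int h * D0) a =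
      kronecker (eps g) a * kronecker (eps h * int h) a * kronecker D0 a"
    unfolding e by (simp add: kron_mult_left)
  have j: "jacobi (int a) (g*h) = jacobi (int a) g * jacobi (int a) h"
    using jac_mult_right assms(3,4) by blast
  have jh: "jacobi (int a) h = kronecker (eps h * int h) a" using KR[OF assms(2) assms(6) ch] by simp
  have jg: "jacobi (int a) g = kronecker (eps g) a * kronecker (int g) a"
    using KR[OF assms(1) assms(6) cg] by (simp add: kron_mult_left)
  have ee: "kronecker (eps g) a * kronecker (eps g) a = 1"
    using kron_mult_left[of "eps g" "eps g" a] eps_sq[of g] kron_one_left by simp
  have jj: "jacobi (int a) h * jacobi (int a) h = 1"
    using jac_mult_left[OF assms(2), of "int a" "int a"] jac_sq[OF ch] by (simp add: power2_eq_square)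
  have "kronecker (eps (g*h) * int h * D0) a * jacobi (int a) (g*h) =
      (kronecker (eps g) a * kronecker (eps g) a) * (jacobi (int a) h * jacobi (int a) h) *
      (kronecker (int g) a * kronecker D0 a)"
    unfolding k1 j jg jh[symmetric] by (simp add: algebra_simps)
  also have "\<dots> = kronecker (int g * D0) a" using ee jj by (simp add: kron_mult_left)
  finally show ?thesis .
qed

lemma sq_int_nat:
  fixes p :: int
  assumes "prime p" "p^2 dvd int h" "squarefree h"
  shows False
proof -
  have "p = int (nat p)" using assms(1) prime_gt_0_int[of p] by simp
  then have "int ((nat p)^2) dvd int h" using assms(2) by (metis of_nat_power)
  then have "(nat p)^2 dvd h" by (simp only: int_dvd_int_iff)
  then have "is_unit (nat p)" using assms(3) unfolding squarefree_def by blast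
  then have "nat p = 1" by simp
  then show False using assms(1) \<open>p = int (nat p)\<close> by (metis not_prime_1 of_nat_1)
qed

lemma fund_twist:
  assumes fD: "fund_disc D" and D: "D = int g * D0" and og: "odd g" and oh: "odd h"
    and sq: "squarefree (g*h)" and ch: "coprime (int h) D0"
  shows "fund_disc (eps (g*h) * int h * D0)"
proof -
  define D1 where "D1 = eps (g*h) * int h * D0"
  define u where "u = eps (g*h) * int (g*h)"
  have u4: "u mod 4 = 1" unfolding u_def using og oh by (intro eps_mod4) simp
  have key: "int g ^ 2 * D1 = u * D" unfolding D1_def u_def D by (simp add: power2_eq_square algebra_simps)
  have g4: "(int g ^ 2) mod 4 = 1" using og by (intro odd_sq_mod4) simp
  have dD: "is_disc D" using fD unfolding fund_disc_def by simp
  have m1: "D1 mod 4 = D mod 4"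
    using mod4_unit[OF g4, of D1] mod4_unit[OF u4, of D] key by simp
  have sqh: "squarefree h" using sq squarefree_multD by blast
  have "fund_disc D1"
  proof (rule fund_char)
    show "is_disc D1" using dD m1 unfolding is_disc_def by simp
  next
    fix p :: int assume p: "prime p" "p^2 dvd D1"
    show "\<not> is_disc (D1 div p^2)"
    proof (cases "odd p")
      case True
      have "eps (g*h) * D1 = (eps (g*h) * eps (g*h)) * int h * D0" unfolding D1_def by (simp add: algebra_simps)
      then have "eps (g*h) * D1 = int h * D0" using eps_sq by simp
      then have phd: "p^2 dvd int h * D0" using p(2) by (metis dvd_mult2 mult.commute)
      show ?thesis
      proof (cases "p dvd int h")
        case True
        then have "\<not> p dvd D0" using ch p(1) by (meson coprime_common_divisor not_prime_unit)
        then have "coprime (p^2) D0" using p(1) by (simp add: prime_imp_coprime)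
        then have "p^2 dvd int h" using phd coprime_dvd_mult_left_iff by blast
        then show ?thesis using sq_int_nat[OF p(1) _ sqh] by blast
      next
        case False
        then have "coprime (p^2) (int h)" using p(1) by (simp add: prime_imp_coprime)
        then have "p^2 dvd D0" using phd coprime_dvd_mult_right_iff by blast
        then have "p^2 dvd D" unfolding D by simp
        then show ?thesis using fund_odd_sq[OF fD p(1) True] by blast
      qed
    next
      case False
      then have "(2::int) dvd p" by simp
      moreover have "prime (2::int)" using two_is_prime_nat by simp
      ultimately have p2: "p = 2" using p(1) primes_dvd_imp_eq by metis
      have "\<not> 2 dvd u" using u4 by presburger
      then have "coprime (2::int) u" using \<open>prime (2::int)\<close> prime_imp_coprime by blast
      then have c4: "coprime ((2::int)^2) u" using coprime_power_left_iff[of "2::int" 2 u] by blast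
      have "(2::int)^2 dvd int g ^ 2 * D1" using p p2 by simp
      then have "(2::int)^2 dvd u * D" using key by simp
      then have d4: "(2::int)^2 dvd D" using c4 coprime_dvd_mult_right_iff by blast
      obtain E where E: "D = 4 * E" using d4 by auto
      obtain E1 where E1: "D1 = 4 * E1" using p p2 by auto
      have "4 * (int g ^ 2 * E1) = 4 * (u * E)" using key E E1 by (simp add: algebra_simps)
      then have k2: "int g ^ 2 * E1 = u * E" by simp
      have "E1 mod 4 = E mod 4"
        using mod4_unit[OF g4, of E1] mod4_unit[OF u4, of E] k2 by simp
      moreover have "\<not> is_disc (D div 2^2)" using fund_div[OF fD \<open>prime (2::int)\<close> d4] .
      ultimately show ?thesis using E E1 p2 unfolding is_disc_def by simp
    qed
  qed
  then show ?thesis unfolding D1_def .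
qed

lemma eps_Suc0 [simp]: "eps (Suc 0) = 1"
  by (simp add: eps_def)

lemma jac_Suc0 [simp]: "jacobi a (Suc 0) = 1"
  by (simp add: jacobi_def)

theorem proposition3p6:
  fixes N l m n :: nat
  assumes "odd N" and "squarefree N" and "1 < l" and "l dvd N" and "m dvd N"
  shows "H l m N (l * n) = real (gcd l (N div m)) * H1 m N n"
proof (cases "n = 0")
  case True
  have "N > 0" using assms(1) by (intro Nat.gr0I) auto
  then have "N div N = 1" by simp
  then show ?thesis using True unfolding H_def by auto
next
  case False
  have N0: "N > 0" using assms(1) by (intro Nat.gr0I) auto
  have ol: "odd l" using assms(1,4) by (metis dvd_trans even_two_times_div_two dvd_triv_left)
  have l0: "l > 0" using assms(3) by simp
  have sql: "squarefree l" using assms(2,4) squarefree_mono by blast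
  have ln0: "l * n \<noteq> 0" using False l0 by simp
  define x where "x = - int n"
  define x1 where "x1 = - eps l * int (l * n)"
  have x1x: "x1 = (eps l * int l) * x" unfolding x1_def x_def by simp
  have u4: "(eps l * int l) mod 4 = 1" using eps_mod4[OF ol] .
  have disc_iff: "is_disc x1 \<longleftrightarrow> is_disc x"
    unfolding is_disc_def x1x mod4_unit[OF u4] ..
  show ?thesis
  proof (cases "is_disc x")
    case False
    then have "\<not> is_disc x1" using disc_iff by simp
    then show ?thesis using False ln0 \<open>n \<noteq> 0\<close> unfolding H_def x1_def x_def by simp
  next
    case True
    have "x \<noteq> 0" using \<open>n \<noteq> 0\<close> unfolding x_def by simp
    then obtain D f where Df: "fund_disc D" "f > 0" "x = D * int f ^ 2"
      using fund_exists[OF True] by blast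
    define g where "g = nat (gcd (int l) D)"
    have ig: "int g = gcd (int l) D" unfolding g_def by simp
    have "gcd (int l) D \<noteq> 0" using l0 by simp
    then have g0: "g > 0" using ig by linarith
    have "int g dvd int l" using ig by simp
    then have gl: "g dvd l" by (simp only: int_dvd_int_iff)
    have gD: "int g dvd D" using ig by simp
    define h where "h = l div g"
    have lgh: "l = g * h" using gl unfolding h_def by simp
    have ilgh: "int l = int g * int h" using lgh by simp
    define D0 where "D0 = D div int g"
    have DD0: "D = int g * D0" using gD unfolding D0_def by simp
    have h0: "h > 0" using lgh l0 by (intro Nat.gr0I) auto
    have og: "odd g" "odd h" using ol lgh by auto
    have sqgh: "squarefree (g*h)" using sql lgh by simp
    have cgh: "coprime g h" using sqgh sqf_coprime by blast
    have chD0: "coprime (int h) D0"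
    proof (rule coprime_by_primes)
      fix p :: int assume p: "prime p" "p dvd int h" "p dvd D0"
      then have "p dvd int l" "p dvd D" using ilgh DD0 by auto
      then have "p dvd int g" using ig by simp
      moreover have "coprime (int g) (int h)" using cgh by simp
      ultimately have "is_unit p" using p(2) coprime_common_divisor by blast
      then show False using p(1) not_prime_unit by blast
    qed
    have cgD0: "coprime (int g) D0"
    proof (rule coprime_by_primes)
      fix p :: int assume p: "prime p" "p dvd int g" "p dvd D0"
      then have "p^2 dvd D" unfolding DD0 by (simp add: power2_eq_square mult_dvd_mono)
      moreover have "odd p"
      proof
        assume "even p"
        then have "2 dvd int g" using p(2) dvd_trans by blast
        then show False using og(1) by simp
      qed
      ultimately show False using fund_odd_sq[OF Df(1) p(1)] by blast
    qed
    define D1 where "D1 = eps l * int h * D0"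
    have fD1: "fund_disc D1" unfolding D1_def using fund_twist[OF Df(1) DD0 og sqgh chD0] lgh by simp
    have x1D1: "x1 = D1 * int (g*f) ^ 2"
      unfolding x1x Df(3) D1_def DD0 ilgh by (simp add: algebra_simps power2_eq_square)
    have fp1: "fund_part x1 = D1" "cond_part x1 = g*f"
      using fund_part_eq[OF fD1 _ x1D1] g0 Df(2) by auto
    have fp0: "fund_part x = D" "cond_part x = f" using fund_part_eq[OF Df] by auto
    have "- int l * int (l*n) = (int l)^2 * x" unfolding x_def by (simp add: power2_eq_square)
    also have "\<dots> = D * int (f*l) ^ 2" unfolding Df(3) by (simp add: power_mult_distrib)
    finally have xl: "- int l * int (l*n) = D * int (f*l) ^ 2" .
    have fpl: "fund_part (- int l * int (l*n)) = D"
      using fund_part_eq[OF Df(1) _ xl] Df(2) l0 by auto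
    have dx1: "is_disc x1" using disc_iff True by simp
    define P where "P = (\<Prod>p\<in>prime_factors (N div m).
                (1 - of_int (kronecker D p) / real p) / (1 - 1 / (real p)^2))"
    define S1 where "S1 = (\<Sum>a\<in>{a. a dvd g*f \<and> coprime a N}.
                of_int (moebius a * kronecker D1 a * jacobi (int a) l)
                * real (sigma_mN1 m N (g*f div a)))"
    define S where "S = (\<Sum>a\<in>{a. a dvd f \<and> coprime a N}.
                of_int (moebius a * kronecker D a)
                * real (sigma_mN1 m N (f div a)))"
    have LHS: "H l m N (l*n) = L0_m m D * P
        * (real_of_int (gcd (int l) D1) / real_of_int (gcd (gcd (int l) D1) (int m))) * S1"
      unfolding H_def Let_def x1_def[symmetric] fp1 fpl P_def S1_def using ln0 dx1 by simp
    have e1: "- eps 1 * int n = x" "- int 1 * int n = x" unfolding x_def by simp_all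
    have RHS: "H1 m N n = L0_m m D * P * S"
      unfolding H_def Let_def e1 fp0 P_def S_def using \<open>n \<noteq> 0\<close> True by simp
    have Q1: "gcd (int l) D1 = int h"
    proof -
      have "coprime (int g) (eps l)" using eps_pm[of l] by auto
      then have c: "coprime (int g) (eps l * D0)" using cgD0 by simp
      have "gcd (int l) D1 = gcd (int h * int g) (int h * (eps l * D0))"
        unfolding D1_def ilgh by (simp add: algebra_simps)
      also have "\<dots> = normalize (int h * gcd (int g) (eps l * D0))" by (rule gcd_mult_left)
      also have "\<dots> = int h" using c by (simp add: coprime_iff_gcd_eq_1)
      finally show ?thesis .
    qed
    have Q1': "real_of_int (gcd (int l) D1) / real_of_int (gcd (gcd (int l) D1) (int m))
        = real h / real (gcd h m)"
      unfolding Q1 by simp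
    have gm0: "gcd g m > 0" using g0 by simp
    have S1S: "S1 = (real g / real (gcd g m)) * S"
    proof -
      have idx: "{a. a dvd g*f \<and> coprime a N} = {a. a dvd f \<and> coprime a N}"
      proof (rule Set.set_eqI)
        fix a
        show "a \<in> {a. a dvd g*f \<and> coprime a N} \<longleftrightarrow> a \<in> {a. a dvd f \<and> coprime a N}"
        proof (cases "coprime a N")
          case True
          have "g dvd N" using gl assms(4) dvd_trans by blast
          then have "coprime a g" using True by (meson coprime_divisors dvd_refl)
          then have "a dvd g*f \<longleftrightarrow> a dvd f" by (rule coprime_dvd_mult_right_iff)
          then show ?thesis using True by simp
        qed simp
      qed
      have tm: "of_int (moebius a * kronecker D1 a * jacobi (int a) l) * real (sigma_mN1 m N (g*f div a))
          = (real g / real (gcd g m)) * (of_int (moebius a * kronecker D a) * real (sigma_mN1 m N (f div a)))"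
        if a: "a \<in> {a. a dvd f \<and> coprime a N}" for a
      proof -
        have adf: "a dvd f" "coprime a N" using a by auto
        have a0: "a > 0" using adf(1) Df(2) by (intro Nat.gr0I) auto
        have cal: "coprime a (g*h)" using adf(2) assms(4) lgh by (metis coprime_divisors dvd_refl)
        have k: "kronecker D1 a * jacobi (int a) l = kronecker D a"
          using KI[OF og g0 h0 cal a0, of D0] unfolding D1_def DD0 lgh .
        have fa: "f = a * (f div a)" using adf(1) by simp
        have r0: "f div a > 0" using Df(2) fa by (intro Nat.gr0I) (metis mult_0_right less_irrefl)
        have gfa: "g*f div a = g * (f div a)" using adf(1) by (simp add: div_mult_swap)
        have "g dvd N" using gl assms(4) dvd_trans by blast
        have sm: "sigma_mN1 m N (g * (f div a)) * gcd g m = sigma_mN1 m N (f div a) * g"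
          using sigma_mult[OF \<open>g dvd N\<close> assms(2,5) r0] .
        then have "real (sigma_mN1 m N (g * (f div a))) * real (gcd g m) = real (sigma_mN1 m N (f div a)) * real g"
          by (metis of_nat_mult)
        then have sr: "real (sigma_mN1 m N (g * (f div a))) = real (sigma_mN1 m N (f div a)) * real g / real (gcd g m)"
          using gm0 by (simp add: field_simps)
        have "moebius a * kronecker D1 a * jacobi (int a) l = moebius a * kronecker D a"
          using k by (simp add: mult.assoc)
        then have e: "real_of_int (moebius a * kronecker D1 a * jacobi (int a) l) = real_of_int (moebius a * kronecker D a)"
          by metis
        show ?thesis unfolding gfa sr e by (simp add: field_simps)
      qed
      show ?thesis unfolding S1_def S_def idx sum_distrib_left using tm by (intro sum.cong) auto
    qed
    define k where "k = N div m"
    have Nmk: "N = m * k" using assms(5) unfolding k_def by simp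
    have cmk: "coprime m k" using assms(2) Nmk sqf_coprime by blast
    have glm: "gcd l m = gcd g m * gcd h m" using lgh gcd_coprime_prod[OF cgh] by simp
    have lN: "gcd l N = l" using assms(4) by (rule gcd_nat.absorb1)
    have "gcd (m*k) l = gcd m l * gcd k l" by (rule gcd_coprime_prod[OF cmk])
    then have "l = gcd l m * gcd l k" using lN Nmk by (simp add: gcd.commute)
    then have "g * h = gcd g m * gcd h m * gcd l k" using glm lgh by simp
    then have nat_eq: "real g * real h = real (gcd g m) * real (gcd h m) * real (gcd l k)"
      by (metis of_nat_mult)
    have hm0: "gcd h m > 0" using h0 by simp
    have fin: "real h / real (gcd h m) * (real g / real (gcd g m)) = real (gcd l (N div m))"
      unfolding k_def[symmetric] using nat_eq gm0 hm0 by (simp add: field_simps)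
    have "H l m N (l*n) = L0_m m D * P * S * (real h / real (gcd h m) * (real g / real (gcd g m)))"
      unfolding LHS Q1' S1S by (simp add: algebra_simps)
    also have "\<dots> = real (gcd l (N div m)) * H1 m N n" unfolding fin RHS by (simp add: algebra_simps)
    finally show ?thesis .
  qed
qed

end
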